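(* Let $m>0$, let $S:M\to\mathbb{R}$ be a smooth function and let $\digamma_0$ be a smooth section of the even Clifford bundle $\mathcal{C\ell}^0(M,\eta)$ which is invertible at every point and satisfies $$-\boldsymbol{\partial}S=m\,\digamma_0\gamma^{0}\digamma_0^{-1}.$$ Put $\digamma=\digamma_0\,e^{S\gamma^{21}}$. If $\digamma$ satisfies the free Dirac-Hestenes equation $$\boldsymbol{\partial}\digamma\,\gamma^{21}-m\,\digamma\gamma^{0}=0,$$ then $\digamma_0$ satisfies the massless Dirac-Hestenes equation $\boldsymbol{\partial}\digamma_0=0$.
   Context: Minkowski spacetime $M\simeq\mathbb{R}^4$ with metric $\eta=\mathrm{diag}(1,-1,-1,-1)$ and global coordinates $\{x^\mu\}$. The $1$-forms $\gamma^\mu=dx^\mu$ are regarded as sections of the Clifford bundle of differential forms $\mathcal{C\ell}(M,\eta)$; juxtaposition denotes the Clifford product, with $\gamma^\mu\gamma^\nu+\gamma^\nu\gamma^\mu=2\eta^{\mu\nu}$. $\gamma^{21}:=\gamma^2\gamma^1$ (so $(\gamma^{21})^2=-1$) and $e^{S\gamma^{21}}=\cos S+\gamma^{21}\sin S$. The Dirac operator is $\boldsymbol{\partial}=\gamma^\mu\partial_\mu$, acting on a Clifford field $\psi$ by $\boldsymbol{\partial}\psi=\gamma^\mu(\partial_\mu\psi)$ (left Clifford multiplication); on a scalar function it gives $\boldsymbol{\partial}S=\gamma^\mu\partial_\mu S=dS$. $\mathcal{C\ell}^0(M,\eta)$ is the even subbundle (sums of $0$-, $2$- and $4$-forms). 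*)

theory Defs
  imports "HOL-Analysis.Analysis"
begin

text \<open>Real Clifford algebra of Minkowski spacetime, metric diag(1,-1,-1,-1).
  A multivector is a real vector indexed by blades, i.e. subsets A of the
  index type 4 = {0,1,2,3}; the basis blade for A = {a1 < ... < ak} is
  gamma^a1 ... gamma^ak (the empty set gives the scalar 1).\<close>

type_synonym mv = "real ^ (4 set)"

definition eta :: "4 \<Rightarrow> real" where
  "eta i = (if i = 0 then 1 else -1)"

text \<open>Sign in the product of basis blades: e_A e_B = blade_sign A B e_(A symdiff B).\<close>
definition blade_sign :: "4 set \<Rightarrow> 4 set \<Rightarrow> real" where
  "blade_sign A B =
     (-1) ^ card {(i, j). i \<in> A \<and> j \<in> B \<and> j < i} * (\<Prod>i\<in>A \<inter> B. eta i)"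

definition cl_mult :: "mv \<Rightarrow> mv \<Rightarrow> mv" (infixl "\<odot>" 70) where
  "a \<odot> b = (\<chi> C. \<Sum>A\<in>UNIV. \<Sum>B\<in>UNIV.
      if (A - B) \<union> (B - A) = C then blade_sign A B * (a $ A) * (b $ B) else 0)"

definition scal :: "real \<Rightarrow> mv" where
  "scal r = (\<chi> A. if A = {} then r else 0)"

definition gam :: "4 \<Rightarrow> mv" where
  "gam \<mu> = (\<chi> A. if A = {\<mu>} then 1 else 0)"

definition gam21 :: mv where
  "gam21 = gam 2 \<odot> gam 1"

text \<open>e^{S gamma^21} = cos S + gamma^21 sin S\<close>
definition exp21 :: "real \<Rightarrow> mv" where
  "exp21 s = scal (cos s) + sin s *\<^sub>R gam21"

definition cl_invertible :: "mv \<Rightarrow> bool" where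
  "cl_invertible a \<longleftrightarrow> (\<exists>b. a \<odot> b = scal 1 \<and> b \<odot> a = scal 1)"

definition cl_inv :: "mv \<Rightarrow> mv" where
  "cl_inv a = (SOME b. a \<odot> b = scal 1 \<and> b \<odot> a = scal 1)"

definition even_mv :: "mv \<Rightarrow> bool" where
  "even_mv a \<longleftrightarrow> (\<forall>A. odd (card A) \<longrightarrow> a $ A = 0)"

fun Ck :: "nat \<Rightarrow> (real^4 \<Rightarrow> 'b::real_normed_vector) \<Rightarrow> bool" where
  "Ck 0 f = continuous_on UNIV f"
| "Ck (Suc k) f = ((\<forall>x. f differentiable (at x)) \<and>
      (\<forall>v. Ck k (\<lambda>x. frechet_derivative f (at x) v)))"

definition smooth :: "(real^4 \<Rightarrow> 'b::real_normed_vector) \<Rightarrow> bool" where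
  "smooth f \<longleftrightarrow> (\<forall>k. Ck k f)"

definition pd :: "4 \<Rightarrow> (real^4 \<Rightarrow> 'b::real_normed_vector) \<Rightarrow> real^4 \<Rightarrow> 'b" where
  "pd \<mu> f x = frechet_derivative f (at x) (axis \<mu> 1)"

definition dirac :: "(real^4 \<Rightarrow> mv) \<Rightarrow> real^4 \<Rightarrow> mv" where
  "dirac \<psi> x = (\<Sum>\<mu>\<in>UNIV. gam \<mu> \<odot> pd \<mu> \<psi> x)"

end

theory Submission
  imports Defs
begin

definition inv2 :: "4 set \<Rightarrow> 4 set \<Rightarrow> nat" where
  "inv2 A B = card {(i, j). i \<in> A \<and> j \<in> B \<and> j < i}"

lemma inv2_Un_left:
  assumes "U \<inter> V = {}" shows "inv2 (U \<union> V) C = inv2 U C + inv2 V C"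
proof -
  have e: "{(i, j). i \<in> U \<union> V \<and> j \<in> C \<and> j < i} =
      {(i, j). i \<in> U \<and> j \<in> C \<and> j < i} \<union> {(i, j). i \<in> V \<and> j \<in> C \<and> j < i}" by auto
  show ?thesis unfolding inv2_def e
    by (rule card_Un_disjoint) (use assms in auto)
qed

lemma inv2_Un_right:
  assumes "U \<inter> V = {}" shows "inv2 C (U \<union> V) = inv2 C U + inv2 C V"
proof -
  have e: "{(i, j). i \<in> C \<and> j \<in> U \<union> V \<and> j < i} =
      {(i, j). i \<in> C \<and> j \<in> U \<and> j < i} \<union> {(i, j). i \<in> C \<and> j \<in> V \<and> j < i}" by auto
  show ?thesis unfolding inv2_def e
    by (rule card_Un_disjoint) (use assms in auto)
qed

lemma inv2_sd_left: "inv2 ((X - Y) \<union> (Y - X)) C + 2 * inv2 (X \<inter> Y) C = inv2 X C + inv2 Y C"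
proof -
  have "X = (X - Y) \<union> (X \<inter> Y)" "Y = (Y - X) \<union> (X \<inter> Y)" by auto
  then have "inv2 X C = inv2 (X - Y) C + inv2 (X \<inter> Y) C" "inv2 Y C = inv2 (Y - X) C + inv2 (X \<inter> Y) C"
    by (metis Diff_disjoint inf_commute inf_left_commute inv2_Un_left Int_Diff_disjoint)+
  moreover have "inv2 ((X - Y) \<union> (Y - X)) C = inv2 (X - Y) C + inv2 (Y - X) C"
    by (rule inv2_Un_left) auto
  ultimately show ?thesis by simp
qed

lemma inv2_sd_right: "inv2 C ((X - Y) \<union> (Y - X)) + 2 * inv2 C (X \<inter> Y) = inv2 C X + inv2 C Y"
proof -
  have "X = (X - Y) \<union> (X \<inter> Y)" "Y = (Y - X) \<union> (X \<inter> Y)" by auto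
  then have "inv2 C X = inv2 C (X - Y) + inv2 C (X \<inter> Y)" "inv2 C Y = inv2 C (Y - X) + inv2 C (X \<inter> Y)"
    by (metis Diff_disjoint inf_commute inf_left_commute inv2_Un_right Int_Diff_disjoint)+
  moreover have "inv2 C ((X - Y) \<union> (Y - X)) = inv2 C (X - Y) + inv2 C (Y - X)"
    by (rule inv2_Un_right) auto
  ultimately show ?thesis by simp
qed

lemma blade_sign_inv2: "blade_sign A B = (-1) ^ inv2 A B * (\<Prod>i\<in>A \<inter> B. eta i)"
  by (simp add: blade_sign_def inv2_def)

lemma prod_maj:
  "(\<Prod>i\<in>A \<inter> B. eta i) * (\<Prod>i\<in>((A - B) \<union> (B - A)) \<inter> C. eta i)
   = (\<Prod>i\<in>(A \<inter> B) \<union> (A \<inter> C) \<union> (B \<inter> C). eta i)"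
proof -
  have u: "(A \<inter> B) \<union> (A \<inter> C) \<union> (B \<inter> C) = (A \<inter> B) \<union> (((A - B) \<union> (B - A)) \<inter> C)" by auto
  have d: "(A \<inter> B) \<inter> (((A - B) \<union> (B - A)) \<inter> C) = {}" by auto
  show ?thesis unfolding u by (rule prod.union_disjoint[symmetric]) (use d in auto)
qed

lemma sign_parity:
  assumes "a + b + 2 * p = c + d + 2 * (q::nat)"
  shows "(-1::real) ^ a * (-1) ^ b = (-1) ^ c * (-1) ^ d"
proof -
  have "(-1::real) ^ a * (-1) ^ b = (-1) ^ (a + b + 2 * p)" by (simp add: power_add power_mult)
  also have "\<dots> = (-1) ^ (c + d + 2 * q)" using assms by simp
  also have "\<dots> = (-1::real) ^ c * (-1) ^ d" by (simp add: power_add power_mult)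
  finally show ?thesis .
qed

lemma blade_sign_cocycle:
  "blade_sign A B * blade_sign ((A - B) \<union> (B - A)) C
   = blade_sign B C * blade_sign A ((B - C) \<union> (C - B))"
proof -
  have p1: "(\<Prod>i\<in>A \<inter> B. eta i) * (\<Prod>i\<in>((A - B) \<union> (B - A)) \<inter> C. eta i)
      = (\<Prod>i\<in>(A \<inter> B) \<union> (A \<inter> C) \<union> (B \<inter> C). eta i)" by (rule prod_maj)
  have p2: "(\<Prod>i\<in>B \<inter> C. eta i) * (\<Prod>i\<in>A \<inter> ((B - C) \<union> (C - B)). eta i)
      = (\<Prod>i\<in>(A \<inter> B) \<union> (A \<inter> C) \<union> (B \<inter> C). eta i)"
    using prod_maj[of B C A] by (simp add: Int_commute Un_ac)
  have s: "(-1::real) ^ inv2 A B * (-1) ^ inv2 ((A - B) \<union> (B - A)) C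
        = (-1) ^ inv2 B C * (-1) ^ inv2 A ((B - C) \<union> (C - B))"
    apply (rule sign_parity[where p = "inv2 (A \<inter> B) C" and q = "inv2 A (B \<inter> C)"])
    using inv2_sd_left[of A B C] inv2_sd_right[of A B C] by linarith
  have "blade_sign A B * blade_sign ((A - B) \<union> (B - A)) C =
     ((-1::real) ^ inv2 A B * (-1) ^ inv2 ((A - B) \<union> (B - A)) C) *
     ((\<Prod>i\<in>A \<inter> B. eta i) * (\<Prod>i\<in>((A - B) \<union> (B - A)) \<inter> C. eta i))"
    unfolding blade_sign_inv2 by (simp only: mult_ac)
  also have "\<dots> = ((-1) ^ inv2 B C * (-1) ^ inv2 A ((B - C) \<union> (C - B))) *
     ((\<Prod>i\<in>B \<inter> C. eta i) * (\<Prod>i\<in>A \<inter> ((B - C) \<union> (C - B)). eta i))"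
    using p1 p2 s by simp
  also have "\<dots> = blade_sign B C * blade_sign A ((B - C) \<union> (C - B))"
    unfolding blade_sign_inv2 by (simp only: mult_ac)
  finally show ?thesis .
qed


definition blade :: "4 set \<Rightarrow> mv" where "blade A = axis A 1"

lemma cl_mult_comp: "(a \<odot> b) $ C = (\<Sum>A\<in>UNIV. \<Sum>B\<in>UNIV.
   (if (A - B) \<union> (B - A) = C then blade_sign A B else 0) * a $ A * b $ B)"
  unfolding cl_mult_def by simp (intro sum.cong refl; simp)

lemma bilinear_cl: "bilinear cl_mult"
  unfolding bilinear_def
  by (auto simp: linear_iff vec_eq_iff cl_mult_comp sum.distrib sum_distrib_left algebra_simps)

lemma bb_cl: "bounded_bilinear cl_mult"
  using bilinear_cl bilinear_conv_bounded_bilinear by blast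

interpretation cl: bounded_bilinear cl_mult by (rule bb_cl)

lemma mv_expand: "a = (\<Sum>A\<in>UNIV. (a $ A) *\<^sub>R blade A)"
  by (simp add: vec_eq_iff blade_def axis_def if_distrib cong: if_cong)

lemma sum_if_const: "(\<Sum>y\<in>S. if P then f y else 0) = (if P then (\<Sum>y\<in>S. f y) else 0)"
  by simp

lemma blade_mult: "blade A \<odot> blade B = blade_sign A B *\<^sub>R blade ((A - B) \<union> (B - A))"
proof -
  have "\<And>C X Y. (if (X - Y) \<union> (Y - X) = C then blade_sign X Y else 0) * blade A $ X * blade B $ Y
     = (if X = A then (if Y = B then (if (A - B) \<union> (B - A) = C then blade_sign A B else 0) else 0) else 0)"
    by (simp add: blade_def axis_def)
  note h = this
  show ?thesis
    apply (simp only: vec_eq_iff cl_mult_comp h sum_if_const)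
    by (simp add: blade_def axis_def)
qed

lemma blade_assoc: "(blade A \<odot> blade B) \<odot> blade C = blade A \<odot> (blade B \<odot> blade C)"
proof -
  have e: "(((A - B) \<union> (B - A)) - C) \<union> (C - ((A - B) \<union> (B - A)))
     = (A - ((B - C) \<union> (C - B))) \<union> (((B - C) \<union> (C - B)) - A)" by blast
  show ?thesis
    by (simp add: blade_mult cl.scaleR_left cl.scaleR_right e blade_sign_cocycle mult.commute)
qed

lemma cl_assoc: "(a \<odot> b) \<odot> c = a \<odot> (b \<odot> c)"
proof -
  have 1: "(a \<odot> b) \<odot> c = (\<Sum>C\<in>UNIV. \<Sum>B\<in>UNIV. \<Sum>A\<in>UNIV.
      (c $ C * (b $ B * a $ A)) *\<^sub>R ((blade A \<odot> blade B) \<odot> blade C))"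
    apply (subst mv_expand[of a], subst mv_expand[of b], subst mv_expand[of c])
    by (simp add: cl.sum_left cl.sum_right cl.scaleR_left cl.scaleR_right scaleR_sum_right)
  have 2: "a \<odot> (b \<odot> c) = (\<Sum>C\<in>UNIV. \<Sum>B\<in>UNIV. \<Sum>A\<in>UNIV.
      (c $ C * (b $ B * a $ A)) *\<^sub>R ((blade A \<odot> blade B) \<odot> blade C))"
    apply (subst mv_expand[of a], subst mv_expand[of b], subst mv_expand[of c])
    by (simp add: cl.sum_left cl.sum_right cl.scaleR_left cl.scaleR_right scaleR_sum_right blade_assoc mult.assoc)
  show ?thesis using 1 2 by simp
qed


lemmas ord4 = less_bit0_def bit0.Rep_numeral bit0.Rep_1 bit0.Rep_0

lemma scal_blade: "scal r = r *\<^sub>R blade {}"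
  by (simp add: vec_eq_iff scal_def blade_def axis_def)

lemma gam_blade: "gam m = blade {m}"
  by (simp add: vec_eq_iff gam_def blade_def axis_def)

lemma blade_empty_left: "blade {} \<odot> a = a"
proof -
  have "blade {} \<odot> a = (\<Sum>A\<in>UNIV. (a $ A) *\<^sub>R (blade {} \<odot> blade A))"
    by (subst (1) mv_expand[of a]) (simp add: cl.sum_right cl.scaleR_right)
  also have "\<dots> = a" by (subst (2) mv_expand[of a]) (simp add: blade_mult blade_sign_def)
  finally show ?thesis .
qed

lemma blade_empty_right: "a \<odot> blade {} = a"
proof -
  have "a \<odot> blade {} = (\<Sum>A\<in>UNIV. (a $ A) *\<^sub>R (blade A \<odot> blade {}))"
    by (subst (1) mv_expand[of a]) (simp add: cl.sum_left cl.scaleR_left)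
  also have "\<dots> = a" by (subst (2) mv_expand[of a]) (simp add: blade_mult blade_sign_def)
  finally show ?thesis .
qed

lemma scal_left: "scal r \<odot> a = r *\<^sub>R a"
  by (simp add: scal_blade cl.scaleR_left blade_empty_left)

lemma scal_right: "a \<odot> scal r = r *\<^sub>R a"
  by (simp add: scal_blade cl.scaleR_right blade_empty_right)

lemma gam21_blade: "gam21 = - blade {1,2}"
proof -
  have c: "{(i, j). i \<in> {2::4} \<and> j \<in> {1} \<and> j < i} = {(2,1)}" by (auto simp: ord4)
  have d: "({2::4} - {1}) \<union> ({1} - {2}) = {1,2}" by (auto simp: ord4)
  show ?thesis unfolding gam21_def gam_blade blade_mult blade_sign_def c d
    by (simp add: ord4)
qed

lemma gam21_sq: "gam21 \<odot> gam21 = - scal 1"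
proof -
  have c: "{(i, j). i \<in> {1::4,2} \<and> j \<in> {1,2} \<and> j < i} = {(2,1)}" by (auto simp: ord4)
  have p: "(\<Prod>i\<in>{1::4,2} \<inter> {1,2}. eta i) = 1" by (simp add: eta_def ord4)
  have d: "({1::4,2} - {1,2}) \<union> ({1,2} - {1,2}) = {}" by simp
  show ?thesis unfolding gam21_blade cl.minus_left cl.minus_right minus_minus blade_mult blade_sign_def c p d
    by (simp add: scal_blade)
qed

lemma gam0_gam21: "gam 0 \<odot> gam21 = gam21 \<odot> gam 0"
proof -
  have c1: "{(i, j). i \<in> {0::4} \<and> j \<in> {1,2} \<and> j < i} = {}" by (auto simp: ord4)
  have c2: "{(i, j). i \<in> {1::4,2} \<and> j \<in> {0} \<and> j < i} = {(1,0),(2,0)}" by (auto simp: ord4)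
  have i1: "{0::4} \<inter> {1,2} = {}" "{1::4,2} \<inter> {0} = {}" by (auto simp: ord4)
  have d: "({0::4} - {1,2}) \<union> ({1,2} - {0}) = ({1,2} - {0}) \<union> ({0} - {1,2})" by auto
  show ?thesis unfolding gam21_blade cl.minus_left cl.minus_right gam_blade blade_mult blade_sign_def
    c1 c2 i1 d by (simp add: ord4)
qed

lemma exp21_alt: "exp21 s = cos s *\<^sub>R scal 1 + sin s *\<^sub>R gam21"
  by (simp add: exp21_def vec_eq_iff scal_def)

lemma exp21_inv: "exp21 s \<odot> exp21 (- s) = scal 1"
proof -
  have "exp21 s \<odot> exp21 (- s) = (cos s * cos s) *\<^sub>R scal 1 + (sin s * sin s) *\<^sub>R scal 1"
    unfolding exp21_alt
    by (simp add: cl.add_left cl.add_right cl.scaleR_left cl.scaleR_right scal_left scal_right gam21_sq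
       cl.diff_right cl.diff_left algebra_simps)
  also have "\<dots> = (cos s * cos s + sin s * sin s) *\<^sub>R scal 1" by (simp only: scaleR_add_left)
  also have "cos s * cos s + sin s * sin s = 1" by (metis sin_cos_squared_add power2_eq_square add.commute)
  finally show ?thesis by simp
qed

lemma gam0_exp21: "gam 0 \<odot> exp21 s = exp21 s \<odot> gam 0"
  unfolding exp21_def
  by (simp add: cl.add_left cl.add_right cl.scaleR_left cl.scaleR_right scal_left scal_right gam0_gam21)

lemma scal_neg: "scal (- r) = r *\<^sub>R (- scal 1)"
  by (simp add: vec_eq_iff scal_def)

lemma exp21_gam21: "exp21 s \<odot> gam21 = scal (- sin s) + cos s *\<^sub>R gam21"
proof -
  have "exp21 s \<odot> gam21 = cos s *\<^sub>R gam21 + sin s *\<^sub>R (- scal 1)"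
    unfolding exp21_def cl.add_left cl.scaleR_left scal_left gam21_sq ..
  then show ?thesis by (simp only: scal_neg add.commute)
qed


lemma point_alg:
  assumes GF: "G \<odot> F = scal 1"
    and dS: "- dS = m *\<^sub>R (F \<odot> gam 0 \<odot> G)"
    and H: "(dS \<odot> (F \<odot> (E \<odot> gam21)) + P \<odot> E) \<odot> gam21 - m *\<^sub>R (F \<odot> E \<odot> gam 0) = 0"
    and EI: "E \<odot> Ei = scal 1"
    and comm: "gam 0 \<odot> E = E \<odot> gam 0"
  shows "P = 0"
proof -
  have dS': "dS = - (m *\<^sub>R (F \<odot> gam 0 \<odot> G))" using dS by (metis minus_minus)
  have "dS \<odot> (F \<odot> (E \<odot> gam21)) \<odot> gam21
      = - (m *\<^sub>R (F \<odot> gam 0 \<odot> (G \<odot> F) \<odot> E \<odot> (gam21 \<odot> gam21)))"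
    unfolding dS' by (simp add: cl.minus_left cl.scaleR_left cl_assoc)
  also have "\<dots> = m *\<^sub>R (F \<odot> (gam 0 \<odot> E))"
    by (simp add: GF gam21_sq scal_left scal_right cl.minus_right cl_assoc)
  also have "\<dots> = m *\<^sub>R (F \<odot> E \<odot> gam 0)" by (simp add: comm cl_assoc)
  finally have t1: "dS \<odot> (F \<odot> (E \<odot> gam21)) \<odot> gam21 = m *\<^sub>R (F \<odot> E \<odot> gam 0)" .
  have PE: "P \<odot> E \<odot> gam21 = 0" using H unfolding cl.add_left t1 by simp
  have "P = - (P \<odot> E \<odot> gam21 \<odot> gam21 \<odot> Ei)"
    by (simp add: cl_assoc gam21_sq cl.minus_left cl.minus_right scal_left scal_right EI[unfolded cl_assoc]
      flip: cl_assoc[of E gam21])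
  also have "\<dots> = 0" by (simp add: PE cl.zero_left)
  finally show ?thesis .
qed


lemma smooth_diff: "smooth f \<Longrightarrow> f differentiable (at x)"
  unfolding smooth_def by (metis Ck.simps(2))

lemma linear_scal: "linear scal"
  by (auto simp: linear_iff vec_eq_iff scal_def)

lemma bl_scal: "bounded_linear scal"
  using linear_scal linear_conv_bounded_linear by blast

lemma pd_scal:
  assumes "(S has_derivative S') (at x)"
  shows "pd m (\<lambda>y. scal (S y)) x = scal (S' (axis m 1))"
proof -
  have "((\<lambda>y. scal (S y)) has_derivative (\<lambda>h. scal (S' h))) (at x)"
    by (rule bounded_linear.has_derivative[OF bl_scal assms])
  from frechet_derivative_at[OF this] show ?thesis unfolding pd_def by metis
qed

lemma exp21_deriv:
  assumes "(S has_derivative S') (at x)"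
  shows "((\<lambda>y. exp21 (S y)) has_derivative (\<lambda>h. S' h *\<^sub>R (exp21 (S x) \<odot> gam21))) (at x)"
proof -
  have H: "((\<lambda>y. cos (S y) *\<^sub>R scal 1 + sin (S y) *\<^sub>R gam21) has_derivative
      (\<lambda>h. (S' h * - sin (S x)) *\<^sub>R scal 1 + (S' h * cos (S x)) *\<^sub>R gam21)) (at x)"
    by (auto intro!: derivative_eq_intros assms)
  have e: "exp21 (S x) \<odot> gam21 = (- sin (S x)) *\<^sub>R scal 1 + cos (S x) *\<^sub>R gam21"
    unfolding exp21_gam21 by (simp add: vec_eq_iff scal_def)
  have D: "(\<lambda>h. (S' h * - sin (S x)) *\<^sub>R scal 1 + (S' h * cos (S x)) *\<^sub>R gam21)
      = (\<lambda>h. S' h *\<^sub>R (exp21 (S x) \<odot> gam21))"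
    unfolding e by (rule ext) (simp only: scaleR_add_right scaleR_scaleR)
  have F: "(\<lambda>y. exp21 (S y)) = (\<lambda>y. cos (S y) *\<^sub>R scal 1 + sin (S y) *\<^sub>R gam21)"
    by (rule ext) (rule exp21_alt)
  show ?thesis using H unfolding D F[symmetric] .
qed

lemma pd_prod:
  assumes dS: "(S has_derivative S') (at x)" and dF: "(F has_derivative F') (at x)"
  shows "pd m (\<lambda>y. F y \<odot> exp21 (S y)) x
     = F x \<odot> (S' (axis m 1) *\<^sub>R (exp21 (S x) \<odot> gam21)) + F' (axis m 1) \<odot> exp21 (S x)"
proof -
  have "((\<lambda>y. F y \<odot> exp21 (S y)) has_derivative
     (\<lambda>h. F x \<odot> (S' h *\<^sub>R (exp21 (S x) \<odot> gam21)) + F' h \<odot> exp21 (S x))) (at x)"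
    by (rule cl.FDERIV[OF dF exp21_deriv[OF dS]])
  from frechet_derivative_at[OF this, symmetric] show ?thesis unfolding pd_def by simp
qed

theorem mainTheorem2:
  fixes m :: real and S :: "real^4 \<Rightarrow> real" and F0 :: "real^4 \<Rightarrow> mv"
  assumes "m > 0"
    and "smooth S"
    and "smooth F0"
    and "\<forall>x. even_mv (F0 x)"
    and "\<forall>x. cl_invertible (F0 x)"
    and "\<forall>x. - dirac (\<lambda>y. scal (S y)) x = m *\<^sub>R (F0 x \<odot> gam 0 \<odot> cl_inv (F0 x))"
    and "\<forall>x. dirac (\<lambda>y. F0 y \<odot> exp21 (S y)) x \<odot> gam21
              - m *\<^sub>R (F0 x \<odot> exp21 (S x) \<odot> gam 0) = 0"
  shows "\<forall>x. dirac F0 x = 0"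
proof
  fix x
  define S' where "S' = frechet_derivative S (at x)"
  define F' where "F' = frechet_derivative F0 (at x)"
  have dS: "(S has_derivative S') (at x)"
    unfolding S'_def using smooth_diff[OF assms(2)] frechet_derivative_works by blast
  have dF: "(F0 has_derivative F') (at x)"
    unfolding F'_def using smooth_diff[OF assms(3)] frechet_derivative_works by blast
  have pdF: "pd \<mu> F0 x = F' (axis \<mu> 1)" for \<mu> unfolding pd_def F'_def ..
  let ?dS = "dirac (\<lambda>y. scal (S y)) x"
  let ?E = "exp21 (S x)"
  have dSe: "?dS = (\<Sum>\<mu>\<in>UNIV. gam \<mu> \<odot> scal (S' (axis \<mu> 1)))"
    unfolding dirac_def pd_scal[OF dS] ..
  have "dirac (\<lambda>y. F0 y \<odot> exp21 (S y)) x
      = (\<Sum>\<mu>\<in>UNIV. gam \<mu> \<odot> (F0 x \<odot> (S' (axis \<mu> 1) *\<^sub>R (?E \<odot> gam21)) + F' (axis \<mu> 1) \<odot> ?E))"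
    unfolding dirac_def pd_prod[OF dS dF] ..
  also have "\<dots> = (\<Sum>\<mu>\<in>UNIV. (gam \<mu> \<odot> scal (S' (axis \<mu> 1))) \<odot> (F0 x \<odot> (?E \<odot> gam21))
        + (gam \<mu> \<odot> F' (axis \<mu> 1)) \<odot> ?E)"
    by (intro sum.cong refl) (simp only: cl.add_right cl.scaleR_right scal_right cl.scaleR_left cl_assoc)
  also have "\<dots> = ?dS \<odot> (F0 x \<odot> (?E \<odot> gam21)) + dirac F0 x \<odot> ?E"
    unfolding dirac_def pdF pd_scal[OF dS] by (simp only: sum.distrib cl.sum_left)
  finally have dP: "dirac (\<lambda>y. F0 y \<odot> exp21 (S y)) x = ?dS \<odot> (F0 x \<odot> (?E \<odot> gam21)) + dirac F0 x \<odot> ?E" .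
  have ex: "\<exists>b. F0 x \<odot> b = scal 1 \<and> b \<odot> F0 x = scal 1"
    using assms(5) unfolding cl_invertible_def by blast
  have H: "F0 x \<odot> cl_inv (F0 x) = scal 1 \<and> cl_inv (F0 x) \<odot> F0 x = scal 1"
    unfolding cl_inv_def by (rule someI_ex[OF ex])
  show "dirac F0 x = 0"
  proof (rule point_alg[where G = "cl_inv (F0 x)" and F = "F0 x" and dS = ?dS and m = m and E = ?E and Ei = "exp21 (- S x)"])
    show "cl_inv (F0 x) \<odot> F0 x = scal 1" using H by blast
    show "- ?dS = m *\<^sub>R (F0 x \<odot> gam 0 \<odot> cl_inv (F0 x))" using assms(6) by blast
    show "(?dS \<odot> (F0 x \<odot> (?E \<odot> gam21)) + dirac F0 x \<odot> ?E) \<odot> gam21 - m *\<^sub>R (F0 x \<odot> ?E \<odot> gam 0) = 0"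
      using spec[OF assms(7), of x] unfolding dP .
    show "?E \<odot> exp21 (- S x) = scal 1" by (rule exp21_inv)
    show "gam 0 \<odot> ?E = ?E \<odot> gam 0" by (rule gam0_exp21)
  qed
qed

end
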